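(* Consider the threshold-sharing interactive proof of knowledge for Rank Syndrome Decoding described in the context. If the prover knows $\mathbf{x}\in\mathbb{F}_{q^m}^n$ with $\mathbf{H}\mathbf{x}=\mathbf{y}$ and $W_R(\mathbf{x})\le r$ and performs the protocol correctly, then the verifier accepts with probability $1$ (the protocol is perfectly complete).
   Context: Let $q$ be a prime power, $m,n,k,r,\eta,\ell,N$ positive integers with $\ell<N$, $\mathbb{F}_{q^m}$ the field with $q^m$ elements and $\mathbb{F}_{q^{m\eta}}$ its degree-$\eta$ extension. For $\mathbf{x}=(x_1,\dots,x_n)\in\mathbb{F}_{q^m}^n$, $W_R(\mathbf{x})$ is the dimension of the $\mathbb{F}_q$-span $U$ of $x_1,\dots,x_n$. A Rank-SD instance is $\mathbf{H}=(\mathbf{I}_{n-k}\,\|\,\mathbf{H}')\in\mathbb{F}_{q^m}^{(n-k)\times n}$, $\mathbf{y}\in\mathbb{F}_{q^m}^{n-k}$; a witness is $\mathbf{x}=(\mathbf{x}_A\|\mathbf{x}_B)$ with $\mathbf{H}\mathbf{x}=\mathbf{y}$, $W_R(\mathbf{x})\le r$, so $\mathbf{x}_A=\mathbf{y}-\mathbf{H}'\mathbf{x}_B$. With $1\in U$, $\dim U=r$, write $\prod_{u\in U}(X-u)=(X^{q^r}-X)+\sum_{i=1}^{r-1}\beta_i(X^{q^i}-X)$. A $(t,N)$-threshold linear secret sharing scheme (LSSS) shares $s$ into $N$ shares so that any $t$ shares reconstruct $s$ (by a linear map) and any $t-1$ reveal nothing. Protocol: the prover builds $(\ell+1,N)$-threshold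 LSSS sharings of $\mathbf{x}_B$, $\boldsymbol\beta$, a uniform $\mathbf{a}\in\mathbb{F}_{q^{m\eta}}^{r}$ and $c=-\langle\boldsymbol\beta,\mathbf{a}\rangle$; party $i$'s state is its shares; it commits each state $\mathsf{cmt}_i=\mathsf{Com}(\mathsf{state}_i,\rho_i)$ and sends the Merkle root $h_0$ of $(\mathsf{cmt}_i)_i$. The verifier sends $((\gamma_j)_{j\le n},\varepsilon)\in\mathbb{F}_{q^{m\eta}}^{n+1}$. For a public set $S$ of $\ell+1$ parties, each party $i\in S$ computes $[\![\mathbf{x}_A]\!]_i=\mathbf{y}-\mathbf{H}'[\![\mathbf{x}_B]\!]_i$, $[\![z]\!]_i=-\sum_j\gamma_j([\![x_j]\!]_i^{q^r}-[\![x_j]\!]_i)$, $[\![\omega_k]\!]_i=\sum_j\gamma_j([\![x_j]\!]_i^{q^k}-[\![x_j]\!]_i)$ $(1\le k\le r-1)$, $[\![\boldsymbol\alpha]\!]_i=\varepsilon[\![\boldsymbol\omega]\!]_i+[\![\mathbf{a}]\!]_i$ ($\boldsymbol\alpha$ is revealed), $[\![v]\!]_i=\varepsilon[\![z]\!]_i-\langle\boldsymbol\alpha,[\![\boldsymbol\beta]\!]_i\rangle-[\![c]\!]_i$; the prover sends $h_1=\mathrm{Hash}(([\![\boldsymbol\alpha]\!]_i,[\![v]\!]_i)_{i\in S})$. The verifier sends $I\subset\{1,\dots,N\}$ with $|I|=\ell$. The prover opens $(\mathsf{state}_i,\rho_i)_{i\in I}$ with Merkle authentication paths, and $[\![\boldsymbol\alpha]\!]_{i^*}$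 for some $i^*\in S\setminus I$. The verifier recomputes the Merkle root, reconstructs $\boldsymbol\alpha$ from the shares in $I\cup\{i^*\}$, sets $[\![v]\!]_{i^*}$ so that $v=0$, recomputes $h_1$, and accepts iff both recomputed values equal $(h_0,h_1)$. *)

theory Defs
  imports "HOL-Computational_Algebra.Polynomial" "HOL-Computational_Algebra.Primes"
begin

text \<open>The ambient type 'a plays the role of F_(q^(m eta)). Subfields are
  described as fixed points of Frobenius powers.\<close>

definition prime_power :: "nat \<Rightarrow> bool" where
  "prime_power q \<longleftrightarrow> (\<exists>p e. prime p \<and> 0 < e \<and> q = p ^ e)"

definition subfield_of_order :: "nat \<Rightarrow> 'a::field set" where
  "subfield_of_order Q = {z. z ^ Q = z}"

definition Fq_span :: "nat \<Rightarrow> 'a::field set \<Rightarrow> 'a set" where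
  "Fq_span q X = {(\<Sum>x\<in>X. c x * x) | c. \<forall>x\<in>X. c x \<in> subfield_of_order q}"

definition Fq_subspace :: "nat \<Rightarrow> 'a::field set \<Rightarrow> bool" where
  "Fq_subspace q U \<longleftrightarrow> 0 \<in> U \<and> (\<forall>u\<in>U. \<forall>v\<in>U. u + v \<in> U)
     \<and> (\<forall>c\<in>subfield_of_order q. \<forall>u\<in>U. c * u \<in> U)"

definition Fq_dim :: "nat \<Rightarrow> 'a::field set \<Rightarrow> nat" where
  "Fq_dim q U = (THE d. card U = q ^ d)"

definition rank_weight :: "nat \<Rightarrow> nat \<Rightarrow> (nat \<Rightarrow> 'a::field) \<Rightarrow> nat" where
  "rank_weight q n x = Fq_dim q (Fq_span q (x ` {..<n}))"

definition subspace_poly_coeffs :: "nat \<Rightarrow> nat \<Rightarrow> 'a::field set \<Rightarrow> (nat \<Rightarrow> 'a) \<Rightarrow> bool" where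
  "subspace_poly_coeffs q r U \<beta> \<longleftrightarrow>
     (\<Prod>u\<in>U. [:- u, 1:]) =
       (monom 1 (q ^ r) - [:0, 1:]) + (\<Sum>i\<in>{1..<r}. smult (\<beta> i) (monom 1 (q ^ i) - [:0, 1:]))"

text \<open>An (ell+1,N)-threshold sharing of s: a polynomial P of degree at most ell
  with P(0) = s; party i gets P(e i).\<close>
definition shamir_poly :: "nat \<Rightarrow> 'a::field poly \<Rightarrow> 'a \<Rightarrow> bool" where
  "shamir_poly ell P s \<longleftrightarrow> degree P \<le> ell \<and> poly P 0 = s"

definition lagrange :: "(nat \<Rightarrow> 'a::field) \<Rightarrow> nat set \<Rightarrow> nat \<Rightarrow> 'a \<Rightarrow> 'a" where
  "lagrange e T j X = (\<Prod>t\<in>T - {j}. (X - e t) / (e j - e t))"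

text \<open>State of a party: (shares of x_B (length k), shares of beta_1..beta_(r-1),
  shares of a_1..a_(r-1), share of c).\<close>
type_synonym 'a state = "'a list \<times> 'a list \<times> 'a list \<times> 'a"

definition st_xB :: "'a state \<Rightarrow> nat \<Rightarrow> 'a" where "st_xB st b = fst st ! b"
definition st_beta :: "'a state \<Rightarrow> nat \<Rightarrow> 'a" where "st_beta st t = fst (snd st) ! (t - 1)"
definition st_a :: "'a state \<Rightarrow> nat \<Rightarrow> 'a" where "st_a st t = fst (snd (snd st)) ! (t - 1)"
definition st_c :: "'a state \<Rightarrow> 'a" where "st_c st = snd (snd (snd st))"

text \<open>x = (x_A || x_B) with x_A = y - H' x_B (coordinates 0..<n-k are x_A,
  coordinate n-k+b is the b-th coordinate of x_B).\<close>
definition loc_x :: "nat \<Rightarrow> nat \<Rightarrow> (nat \<Rightarrow> nat \<Rightarrow> 'a::field) \<Rightarrow> (nat \<Rightarrow> 'a) \<Rightarrow> (nat \<Rightarrow> 'a) \<Rightarrow> nat \<Rightarrow> 'a" where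
  "loc_x n k H' y xB j = (if j < n - k then y j - (\<Sum>b<k. H' j b * xB b) else xB (j - (n - k)))"

definition loc_z :: "nat \<Rightarrow> nat \<Rightarrow> nat \<Rightarrow> (nat \<Rightarrow> 'a::field) \<Rightarrow> (nat \<Rightarrow> 'a) \<Rightarrow> 'a" where
  "loc_z q r n \<gamma> xs = - (\<Sum>j<n. \<gamma> j * (xs j ^ (q ^ r) - xs j))"

definition loc_omega :: "nat \<Rightarrow> nat \<Rightarrow> (nat \<Rightarrow> 'a::field) \<Rightarrow> (nat \<Rightarrow> 'a) \<Rightarrow> nat \<Rightarrow> 'a" where
  "loc_omega q n \<gamma> xs t = (\<Sum>j<n. \<gamma> j * (xs j ^ (q ^ t) - xs j))"

definition party_alpha :: "nat \<Rightarrow> nat \<Rightarrow> nat \<Rightarrow> nat \<Rightarrow> (nat \<Rightarrow> nat \<Rightarrow> 'a::field) \<Rightarrow> (nat \<Rightarrow> 'a)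
    \<Rightarrow> (nat \<Rightarrow> 'a) \<Rightarrow> 'a \<Rightarrow> 'a state \<Rightarrow> 'a list" where
  "party_alpha q r n k H' y \<gamma> \<epsilon> st =
     map (\<lambda>t. \<epsilon> * loc_omega q n \<gamma> (loc_x n k H' y (st_xB st)) t + st_a st t) [1..<r]"

definition party_v :: "nat \<Rightarrow> nat \<Rightarrow> nat \<Rightarrow> nat \<Rightarrow> (nat \<Rightarrow> nat \<Rightarrow> 'a::field) \<Rightarrow> (nat \<Rightarrow> 'a)
    \<Rightarrow> (nat \<Rightarrow> 'a) \<Rightarrow> 'a \<Rightarrow> (nat \<Rightarrow> 'a) \<Rightarrow> 'a state \<Rightarrow> 'a" where
  "party_v q r n k H' y \<gamma> \<epsilon> \<alpha> st =
     \<epsilon> * loc_z q r n \<gamma> (loc_x n k H' y (st_xB st)) - (\<Sum>t\<in>{1..<r}. \<alpha> t * st_beta st t) - st_c st"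

text \<open>Root of the depth-d subtree whose leaves are f o, ..., f (o + 2^d - 1).\<close>
fun mroot :: "('h \<Rightarrow> 'h \<Rightarrow> 'h) \<Rightarrow> (nat \<Rightarrow> 'h) \<Rightarrow> nat \<Rightarrow> nat \<Rightarrow> 'h" where
  "mroot MH f 0 off = f off"
| "mroot MH f (Suc d) off = MH (mroot MH f d off) (mroot MH f d (off + 2 ^ d))"

text \<open>Authentication path (siblings, bottom-up) of leaf i.\<close>
fun mpath :: "('h \<Rightarrow> 'h \<Rightarrow> 'h) \<Rightarrow> (nat \<Rightarrow> 'h) \<Rightarrow> nat \<Rightarrow> nat \<Rightarrow> nat \<Rightarrow> 'h list" where
  "mpath MH f 0 off i = []"
| "mpath MH f (Suc d) off i =
     (if i < off + 2 ^ d then mpath MH f d off i @ [mroot MH f d (off + 2 ^ d)]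
      else mpath MH f d (off + 2 ^ d) i @ [mroot MH f d off])"

fun mrec :: "('h \<Rightarrow> 'h \<Rightarrow> 'h) \<Rightarrow> 'h \<Rightarrow> nat \<Rightarrow> nat \<Rightarrow> 'h list \<Rightarrow> 'h" where
  "mrec MH h i l [] = h"
| "mrec MH h i l (s # ps) = mrec MH (if (i div 2 ^ l) mod 2 = 0 then MH h s else MH s h) i (Suc l) ps"

definition honest_state :: "(nat \<Rightarrow> 'a::field) \<Rightarrow> nat \<Rightarrow> nat \<Rightarrow> (nat \<Rightarrow> 'a poly) \<Rightarrow> (nat \<Rightarrow> 'a poly)
    \<Rightarrow> (nat \<Rightarrow> 'a poly) \<Rightarrow> 'a poly \<Rightarrow> nat \<Rightarrow> 'a state" where
  "honest_state e k r PxB Pbeta Pa Pc i =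
     (map (\<lambda>b. poly (PxB b) (e i)) [0..<k], map (\<lambda>t. poly (Pbeta t) (e i)) [1..<r],
      map (\<lambda>t. poly (Pa t) (e i)) [1..<r], poly Pc (e i))"

text \<open>Merkle leaves: leaf number i-1 is cmt_i for parties i = 1..N, padding beyond.\<close>
definition cmt_leaves :: "nat \<Rightarrow> ('s \<Rightarrow> 'r \<Rightarrow> 'h) \<Rightarrow> 'h \<Rightarrow> (nat \<Rightarrow> 's) \<Rightarrow> (nat \<Rightarrow> 'r) \<Rightarrow> nat \<Rightarrow> 'h" where
  "cmt_leaves N Com pad st \<rho> idx = (if idx < N then Com (st (Suc idx)) (\<rho> (Suc idx)) else pad)"

definition prover_h0 where
  "prover_h0 MH Com pad d N st \<rho> = mroot MH (cmt_leaves N Com pad st \<rho>) d 0"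

definition prover_path where
  "prover_path MH Com pad d N st \<rho> i = mpath MH (cmt_leaves N Com pad st \<rho>) d 0 (i - 1)"

definition prover_alpha :: "nat \<Rightarrow> nat \<Rightarrow> nat \<Rightarrow> nat \<Rightarrow> (nat \<Rightarrow> nat \<Rightarrow> 'a::field) \<Rightarrow> (nat \<Rightarrow> 'a)
    \<Rightarrow> (nat \<Rightarrow> 'a) \<Rightarrow> nat set \<Rightarrow> (nat \<Rightarrow> 'a) \<Rightarrow> 'a \<Rightarrow> (nat \<Rightarrow> 'a state) \<Rightarrow> nat \<Rightarrow> 'a" where
  "prover_alpha q r n k H' y e S \<gamma> \<epsilon> st t =
     (\<Sum>i\<in>S. lagrange e S i 0 * (party_alpha q r n k H' y \<gamma> \<epsilon> (st i) ! (t - 1)))"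

definition prover_h1 where
  "prover_h1 q r n k H' y e S Hash \<gamma> \<epsilon> st =
     Hash (map (\<lambda>i. (party_alpha q r n k H' y \<gamma> \<epsilon> (st i),
                     party_v q r n k H' y \<gamma> \<epsilon> (prover_alpha q r n k H' y e S \<gamma> \<epsilon> st) (st i)))
               (sorted_list_of_set S))"

definition verifier_accepts ::
  "nat \<Rightarrow> nat \<Rightarrow> nat \<Rightarrow> nat \<Rightarrow> (nat \<Rightarrow> nat \<Rightarrow> 'a::field) \<Rightarrow> (nat \<Rightarrow> 'a) \<Rightarrow> (nat \<Rightarrow> 'a) \<Rightarrow> nat set
   \<Rightarrow> ('h \<Rightarrow> 'h \<Rightarrow> 'h) \<Rightarrow> ('a state \<Rightarrow> 'r \<Rightarrow> 'h) \<Rightarrow> (('a list \<times> 'a) list \<Rightarrow> 'g)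
   \<Rightarrow> 'h \<Rightarrow> 'g \<Rightarrow> (nat \<Rightarrow> 'a) \<Rightarrow> 'a \<Rightarrow> nat set \<Rightarrow> nat
   \<Rightarrow> (nat \<Rightarrow> 'a state) \<Rightarrow> (nat \<Rightarrow> 'r) \<Rightarrow> (nat \<Rightarrow> 'h list) \<Rightarrow> 'a list \<Rightarrow> bool" where
  "verifier_accepts q r n k H' y e S MH Com Hash h0 h1 \<gamma> \<epsilon> I istar st \<rho> path \<alpha>star \<longleftrightarrow>
     (\<forall>i\<in>I. mrec MH (Com (st i) (\<rho> i)) (i - 1) 0 (path i) = h0) \<and>
     (let T = insert istar I;
          ash = (\<lambda>i. if i = istar then \<alpha>star else party_alpha q r n k H' y \<gamma> \<epsilon> (st i));
          \<alpha> = (\<lambda>t. \<Sum>i\<in>T. lagrange e T i 0 * (ash i ! (t - 1)));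
          vI = (\<lambda>i. party_v q r n k H' y \<gamma> \<epsilon> \<alpha> (st i));
          vstar = - (\<Sum>i\<in>I. lagrange e T i 0 * vI i) / lagrange e T istar 0;
          vsh = (\<lambda>i. if i = istar then vstar else vI i);
          aexp = (\<lambda>i. map (\<lambda>t. \<Sum>j\<in>T. lagrange e T j (e i) * (ash j ! (t - 1))) [1..<r]);
          vexp = (\<lambda>i. \<Sum>j\<in>T. lagrange e T j (e i) * vsh j)
      in Hash (map (\<lambda>i. (aexp i, vexp i)) (sorted_list_of_set S)) = h1)"

end

theory Submission
  imports Defs "HOL-Number_Theory.Residues"
begin


definition lowdeg :: "nat \<Rightarrow> (nat \<Rightarrow> 'a::field) \<Rightarrow> nat set \<Rightarrow> (nat \<Rightarrow> 'a) \<Rightarrow> 'a \<Rightarrow> bool" where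
  "lowdeg ell e A sh s \<longleftrightarrow> (\<exists>Q. degree Q \<le> ell \<and> poly Q 0 = s \<and> (\<forall>i\<in>A. sh i = poly Q (e i)))"

lemma lowdeg_const: "lowdeg ell e A (\<lambda>_. c) c"
  unfolding lowdeg_def by (rule exI[of _ "[:c:]"]) auto

lemma lowdeg_poly: "degree Q \<le> ell \<Longrightarrow> lowdeg ell e A (\<lambda>i. poly Q (e i)) (poly Q 0)"
  unfolding lowdeg_def by blast

lemma lowdeg_cong: "lowdeg ell e A f s \<Longrightarrow> (\<And>i. i \<in> A \<Longrightarrow> f i = g i) \<Longrightarrow> s = t \<Longrightarrow> lowdeg ell e A g t"
  unfolding lowdeg_def by auto

lemma lowdeg_add: "lowdeg ell e A f s \<Longrightarrow> lowdeg ell e A g t \<Longrightarrow> lowdeg ell e A (\<lambda>i. f i + g i) (s + t)"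
  unfolding lowdeg_def
  by (metis (no_types, lifting) degree_add_le poly_add)

lemma lowdeg_diff: "lowdeg ell e A f s \<Longrightarrow> lowdeg ell e A g t \<Longrightarrow> lowdeg ell e A (\<lambda>i. f i - g i) (s - t)"
  unfolding lowdeg_def
  by (metis (no_types, lifting) degree_diff_le poly_diff)

lemma lowdeg_cmult: "lowdeg ell e A f s \<Longrightarrow> lowdeg ell e A (\<lambda>i. c * f i) (c * s)"
  unfolding lowdeg_def
  by (metis (no_types, lifting) degree_smult_le order_trans poly_smult)

lemma lowdeg_uminus: "lowdeg ell e A f s \<Longrightarrow> lowdeg ell e A (\<lambda>i. - f i) (- s)"
  using lowdeg_diff[OF lowdeg_const, of ell e A f s 0] by simp

lemma lowdeg_sum: "finite B \<Longrightarrow> (\<And>b. b \<in> B \<Longrightarrow> lowdeg ell e A (f b) (s b))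
   \<Longrightarrow> lowdeg ell e A (\<lambda>i. \<Sum>b\<in>B. f b i) (\<Sum>b\<in>B. s b)"
proof (induction B rule: finite_induct)
  case empty
  then show ?case using lowdeg_const[of ell e A 0] by simp
next
  case (insert x F)
  then show ?case using lowdeg_add[of ell e A "f x" "s x" "\<lambda>i. \<Sum>b\<in>F. f b i" "\<Sum>b\<in>F. s b"]
    by simp
qed

lemma poly_frob:
  fixes Q :: "'a::field poly"
  assumes fr: "\<And>x y::'a. (x + y) ^ m = x ^ m + y ^ m" and m: "m > 0"
  shows "poly (map_poly (\<lambda>c. c ^ m) Q) (z ^ m) = (poly Q z) ^ m"
proof (induction Q rule: pCons_induct)
  case 0
  then show ?case using m by simp
next
  case (pCons a p)
  have "map_poly (\<lambda>c. c ^ m) (pCons a p) = pCons (a ^ m) (map_poly (\<lambda>c. c ^ m) p)"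
    by (rule map_poly_pCons) (use m in simp)
  then show ?case using pCons by (simp add: fr power_mult_distrib)
qed

lemma lowdeg_pow:
  fixes f :: "nat \<Rightarrow> 'a::field"
  assumes fr: "\<And>x y::'a. (x + y) ^ m = x ^ m + y ^ m" and m: "m > 0"
    and ef: "\<And>i. i \<in> A \<Longrightarrow> e i ^ m = e i"
    and L: "lowdeg ell e A f s"
  shows "lowdeg ell e A (\<lambda>i. f i ^ m) (s ^ m)"
proof -
  obtain Q where Q: "degree Q \<le> ell" "poly Q 0 = s" "\<forall>i\<in>A. f i = poly Q (e i)"
    using L unfolding lowdeg_def by blast
  let ?Q = "map_poly (\<lambda>c. c ^ m) Q"
  have "degree ?Q = degree Q" by (rule degree_map_poly) simp
  hence "degree ?Q \<le> ell" using Q(1) by simp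
  moreover have "poly ?Q 0 = s ^ m"
    using poly_frob[OF fr m, of Q 0] m Q(2) by (simp add: power_0_left)
  moreover have "\<forall>i\<in>A. f i ^ m = poly ?Q (e i)"
    using poly_frob[OF fr m, of Q] ef Q(3) by metis
  ultimately show ?thesis unfolding lowdeg_def by blast
qed

lemma sum_ind_mult: "finite T \<Longrightarrow> i \<in> T \<Longrightarrow> (\<Sum>j\<in>T. (if j = i then 1 else 0) * (g j::'a::field)) = g i"
  by (simp add: if_distrib[of "\<lambda>x. x * _"] sum.delta' cong: if_cong)

lemma lagrange_self:
  fixes e :: "nat \<Rightarrow> 'a::field"
  assumes T: "finite T" "inj_on e T" and i: "i \<in> T"
  shows "lagrange e T i (e i) = 1"
proof -
  have ne: "e i - e t \<noteq> 0" if "t \<in> T - {i}" for t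
    using inj_on_eq_iff[OF T(2), of i t] that i by auto
  have "lagrange e T i (e i) = (\<Prod>t\<in>T - {i}. 1)"
    unfolding lagrange_def
    by (rule prod.cong[OF refl]) (use ne in simp)
  then show ?thesis by simp
qed

lemma lagrange_other:
  fixes e :: "nat \<Rightarrow> 'a::field"
  assumes T: "finite T" and i: "i \<in> T" "j \<noteq> i"
  shows "lagrange e T j (e i) = 0"
  unfolding lagrange_def
proof (rule iffD2[OF prod_zero_iff])
  show "finite (T - {j})" using T by simp
  show "\<exists>a\<in>T - {j}. (e i - e a) / (e j - e a) = 0"
    using i by (intro bexI[of _ i]) auto
qed
lemma lagrange_poly:
  fixes Q :: "'a::field poly"
  assumes T: "finite T" "card T = Suc ell" "inj_on e T" and dQ: "degree Q \<le> ell"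
  shows "(\<Sum>j\<in>T. lagrange e T j X * poly Q (e j)) = poly Q X"
proof -
  define L where "L = (\<Sum>j\<in>T. Polynomial.smult (poly Q (e j)) (\<Prod>t\<in>T - {j}. Polynomial.smult (1 / (e j - e t)) [:- e t, 1:]))"
  have pL: "poly L X = (\<Sum>j\<in>T. lagrange e T j X * poly Q (e j))" for X
    unfolding L_def lagrange_def by (simp add: poly_sum poly_prod divide_inverse algebra_simps)
  have dL: "degree L \<le> ell"
    unfolding L_def
  proof (rule degree_sum_le[OF T(1)])
    fix j assume j: "j \<in> T"
    have "degree (\<Prod>t\<in>T - {j}. Polynomial.smult (1 / (e j - e t)) [:- e t, 1:]) \<le> (\<Sum>t\<in>T - {j}. degree (Polynomial.smult (1 / (e j - e t)) [:- e t, 1:]))"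
      using degree_prod_sum_le[of "T - {j}" "\<lambda>t. Polynomial.smult (1 / (e j - e t)) [:- e t, 1:]"] T(1)
      unfolding o_def by blast
    also have "\<dots> \<le> (\<Sum>t\<in>T - {j}. 1)"
      by (intro sum_mono, rule order_trans[OF degree_smult_le]) simp
    also have "\<dots> = ell" using j T by simp
    finally show "degree (Polynomial.smult (poly Q (e j)) (\<Prod>t\<in>T - {j}. Polynomial.smult (1 / (e j - e t)) [:- e t, 1:])) \<le> ell"
      by (rule order_trans[OF degree_smult_le])
  qed
  have lag: "lagrange e T j (e i) = (if j = i then 1 else 0)" if "i \<in> T" "j \<in> T" for i j
    using lagrange_self[OF T(1,3) that(1)] lagrange_other[OF T(1) that(1)] by (cases "j = i") simp_all
  have "L = Q"
  proof (rule poly_eqI_degree[of "e ` T"])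
    fix x assume "x \<in> e ` T"
    then obtain i where i: "i \<in> T" "x = e i" by blast
    have "poly L x = (\<Sum>j\<in>T. lagrange e T j (e i) * poly Q (e j))"
      using i by (simp only: pL)
    also have "\<dots> = (\<Sum>j\<in>T. (if j = i then 1 else 0) * poly Q (e j))"
      proof (rule sum.cong[OF refl])
      fix j assume j: "j \<in> T"
      show "lagrange e T j (e i) * poly Q (e j) = (if j = i then 1 else 0) * poly Q (e j)"
        unfolding lag[OF i(1) j] by (rule refl)
    qed
    also have "\<dots> = poly Q (e i)" by (rule sum_ind_mult[OF T(1) i(1)])
    also have "\<dots> = poly Q x" using i by simp
    finally show "poly L x = poly Q x" .
  next
    show "degree L < card (e ` T)" using dL T by (simp add: card_image)
    show "degree Q < card (e ` T)" using dQ T by (simp add: card_image)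
  qed
  then have h: "poly L X = poly Q X" by simp
  show ?thesis by (rule trans[OF pL[symmetric] h])
qed

lemma lowdeg_lagrange:
  assumes L: "lowdeg ell e A f s" and T: "T \<subseteq> A" "finite T" "card T = Suc ell" and inj: "inj_on e A"
  shows "(\<Sum>j\<in>T. lagrange e T j 0 * f j) = s"
    and "\<And>i. i \<in> A \<Longrightarrow> (\<Sum>j\<in>T. lagrange e T j (e i) * f j) = f i"
proof -
  obtain Q where Q: "degree Q \<le> ell" "poly Q 0 = s" "\<forall>i\<in>A. f i = poly Q (e i)"
    using L unfolding lowdeg_def by blast
  have injT: "inj_on e T" using inj T(1) inj_on_subset by blast
  have eq: "(\<Sum>j\<in>T. lagrange e T j X * f j) = poly Q X" for X
  proof -
    have "(\<Sum>j\<in>T. lagrange e T j X * f j) = (\<Sum>j\<in>T. lagrange e T j X * poly Q (e j))"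
      using Q(3) T(1) by (intro sum.cong) auto
    also have "\<dots> = poly Q X" by (rule lagrange_poly[OF T(2,3) injT Q(1)])
    finally show ?thesis .
  qed
  show "(\<Sum>j\<in>T. lagrange e T j 0 * f j) = s" using eq Q(2) by simp
  show "\<And>i. i \<in> A \<Longrightarrow> (\<Sum>j\<in>T. lagrange e T j (e i) * f j) = f i" using eq Q(3) by simp
qed

lemma mrec_snoc: "mrec MH h i l (ps @ [s]) =
   (let h' = mrec MH h i l ps in if (i div 2 ^ (l + length ps)) mod 2 = 0 then MH h' s else MH s h')"
  by (induction ps arbitrary: h l) (simp_all add: Let_def)

lemma mpath_length: "length (mpath MH f d off i) = d"
  by (induction d arbitrary: off) auto

lemma merkle_ok: "off = c * 2 ^ d \<Longrightarrow> off \<le> i \<Longrightarrow> i < off + 2 ^ d \<Longrightarrow>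
   mrec MH (f i) i 0 (mpath MH f d off i) = mroot MH f d off"
proof (induction d arbitrary: off c)
  case 0
  then have "i = off" by simp
  then show ?case by simp
next
  case (Suc d)
  show ?case
  proof (cases "i < off + 2 ^ d")
    case True
    have off: "off = (2 * c) * 2 ^ d" using Suc.prems by simp
    have IH: "mrec MH (f i) i 0 (mpath MH f d off i) = mroot MH f d off"
      using Suc.IH[OF off] Suc.prems True by simp
    have "i div 2 ^ d = 2 * c"
      using Suc.prems True off by (intro div_nat_eqI) (auto simp: algebra_simps)
    then show ?thesis using True IH by (simp add: mrec_snoc mpath_length)
  next
    case False
    have off: "off + 2 ^ d = (2 * c + 1) * 2 ^ d" using Suc.prems by simp
    have IH: "mrec MH (f i) i 0 (mpath MH f d (off + 2 ^ d) i) = mroot MH f d (off + 2 ^ d)"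
      using Suc.IH[OF off] Suc.prems False by simp
    have "i div 2 ^ d = 2 * c + 1"
      using Suc.prems False off by (intro div_nat_eqI) (auto simp: algebra_simps)
    then show ?thesis using False IH by (simp add: mrec_snoc mpath_length)
  qed
qed



lemma frob_add:
  fixes x y :: "'a::{field,finite}"
  assumes q: "prime_power q" and card: "card (UNIV :: 'a set) = q ^ M"
  shows "(x + y) ^ (q ^ s) = x ^ (q ^ s) + y ^ (q ^ s)"
proof -
  obtain p e0 where p: "prime p" "0 < e0" "q = p ^ e0" using q unfolding prime_power_def by blast
  have "CHAR('a) > 0" by (rule finite_imp_CHAR_pos) simp
  then have pc: "prime CHAR('a)" by (rule prime_CHAR_semidom)
  have "CHAR('a) dvd p ^ (e0 * M)" using CHAR_dvd_CARD[where 'a='a] card p(3)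
    by (simp add: power_mult)
  then have "CHAR('a) dvd p" using pc prime_dvd_power by blast
  then have cp: "CHAR('a) = p" using pc p(1) primes_dvd_imp_eq by blast
  have "q ^ s = CHAR('a) ^ (e0 * s)" using cp p(3) by (simp add: power_mult)
  then show ?thesis using freshmans_dream'[OF pc] by blast
qed

lemma frob_fix:
  fixes x :: "'a::field"
  assumes "x ^ q = x"
  shows "x ^ (q ^ s) = x"
proof (induction s)
  case 0 then show ?case by simp
next
  case (Suc s)
  have "x ^ (q ^ Suc s) = (x ^ q) ^ (q ^ s)" by (simp add: power_mult mult.commute)
  then show ?case using assms Suc by simp
qed



theorem theorem4:
  fixes q m n k r \<eta> ell N d :: nat
    and H' :: "nat \<Rightarrow> nat \<Rightarrow> 'a::{field,finite}" and y x :: "nat \<Rightarrow> 'a"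
    and U :: "'a set" and \<beta> a :: "nat \<Rightarrow> 'a" and c :: 'a
    and PxB Pbeta Pa :: "nat \<Rightarrow> 'a poly" and Pc :: "'a poly"
    and e :: "nat \<Rightarrow> 'a"
    and Com :: "'a state \<Rightarrow> 'r \<Rightarrow> 'h" and \<rho> :: "nat \<Rightarrow> 'r"
    and MH :: "'h \<Rightarrow> 'h \<Rightarrow> 'h" and pad :: 'h
    and Hash :: "('a list \<times> 'a) list \<Rightarrow> 'g"
    and S I :: "nat set" and istar :: nat
    and \<gamma> :: "nat \<Rightarrow> 'a" and \<epsilon> :: 'a
  assumes q: "prime_power q"
    and card_field: "card (UNIV :: 'a set) = q ^ (m * \<eta>)"
    and pos: "0 < m" "0 < n" "0 < k" "0 < r" "0 < \<eta>" "0 < ell" "0 < N"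
    and ell_N: "ell < N" and k_n: "k < n"
    and inst: "\<forall>i<n-k. \<forall>b<k. H' i b \<in> subfield_of_order (q ^ m)"
              "\<forall>i<n-k. y i \<in> subfield_of_order (q ^ m)"
    and x_in: "\<forall>j<n. x j \<in> subfield_of_order (q ^ m)"
    and syndrome: "\<forall>i<n-k. x i + (\<Sum>b<k. H' i b * x (n - k + b)) = y i"
    and weight: "rank_weight q n x \<le> r"
    and U: "U \<subseteq> subfield_of_order (q ^ m)" "Fq_subspace q U" "1 \<in> U" "Fq_dim q U = r"
           "\<forall>j<n. x j \<in> U"
    and beta: "subspace_poly_coeffs q r U \<beta>"
    and c: "c = - (\<Sum>t\<in>{1..<r}. \<beta> t * a t)"
    and shares: "\<forall>b<k. shamir_poly ell (PxB b) (x (n - k + b))"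
                "\<forall>t\<in>{1..<r}. shamir_poly ell (Pbeta t) (\<beta> t)"
                "\<forall>t\<in>{1..<r}. shamir_poly ell (Pa t) (a t)"
                "shamir_poly ell Pc c"
    and points: "inj_on e {1..N}" "\<forall>i\<in>{1..N}. e i \<in> subfield_of_order q \<and> e i \<noteq> 0"
    and merkle: "N \<le> 2 ^ d"
    and S: "S \<subseteq> {1..N}" "card S = ell + 1"
    and I: "I \<subseteq> {1..N}" "card I = ell"
    and istar: "istar \<in> S - I"
  shows "let st = honest_state e k r PxB Pbeta Pa Pc in
         verifier_accepts q r n k H' y e S MH Com Hash
           (prover_h0 MH Com pad d N st \<rho>)
           (prover_h1 q r n k H' y e S Hash \<gamma> \<epsilon> st)
           \<gamma> \<epsilon> I istar st \<rho>
           (prover_path MH Com pad d N st \<rho>)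
           (party_alpha q r n k H' y \<gamma> \<epsilon> (st istar))"
proof -
  define st where "st = honest_state e k r PxB Pbeta Pa Pc"
  define A where "A = {1..N}"
  define PA where "PA = prover_alpha q r n k H' y e S \<gamma> \<epsilon> st"
  define T where "T = insert istar I"
  have finI: "finite I" using I(1) finite_subset by blast
  have finS: "finite S" using S(1) finite_subset by blast
  have istarI: "istar \<notin> I" "istar \<in> S" using istar by auto
  have TA: "T \<subseteq> A" using I(1) S(1) istar unfolding T_def A_def by auto
  have finT: "finite T" unfolding T_def using finI by simp
  have cardT: "card T = Suc ell" using finI istarI I(2) by (simp add: T_def)
  have SA: "S \<subseteq> A" using S(1) unfolding A_def .
  have cardS: "card S = Suc ell" using S(2) by simp
  have inj: "inj_on e A" using points(1) unfolding A_def .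
  have q2: "q > 0" using q unfolding prime_power_def using prime_gt_0_nat by fastforce
  have fr: "\<And>s (u::'a) v. (u + v) ^ (q ^ s) = u ^ (q ^ s) + v ^ (q ^ s)"
    using frob_add[OF q card_field] by blast
  have qs: "\<And>s. q ^ s > 0" using q2 by simp
  have ef: "\<And>s i. i \<in> A \<Longrightarrow> e i ^ (q ^ s) = e i"
    using points(2) frob_fix unfolding subfield_of_order_def A_def by blast
  have stxB: "\<And>i b. b < k \<Longrightarrow> st_xB (st i) b = poly (PxB b) (e i)"
    by (simp add: st_def honest_state_def st_xB_def)
  have stbeta: "\<And>i t. t \<in> {1..<r} \<Longrightarrow> st_beta (st i) t = poly (Pbeta t) (e i)"
    by (auto simp: st_def honest_state_def st_beta_def)
  have sta: "\<And>i t. t \<in> {1..<r} \<Longrightarrow> st_a (st i) t = poly (Pa t) (e i)"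
    by (auto simp: st_def honest_state_def st_a_def)
  have stc: "\<And>i. st_c (st i) = poly Pc (e i)"
    by (simp add: st_def honest_state_def st_c_def)
  have px: "\<And>b. b < k \<Longrightarrow> lowdeg ell e A (\<lambda>i. poly (PxB b) (e i)) (x (n - k + b))"
    using shares(1) lowdeg_poly unfolding shamir_poly_def by metis
  have pbeta: "\<And>t. t \<in> {1..<r} \<Longrightarrow> lowdeg ell e A (\<lambda>i. poly (Pbeta t) (e i)) (\<beta> t)"
    using shares(2) lowdeg_poly unfolding shamir_poly_def by metis
  have pa: "\<And>t. t \<in> {1..<r} \<Longrightarrow> lowdeg ell e A (\<lambda>i. poly (Pa t) (e i)) (a t)"
    using shares(3) lowdeg_poly unfolding shamir_poly_def by metis
  have pc: "lowdeg ell e A (\<lambda>i. poly Pc (e i)) c"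
    using shares(4) lowdeg_poly unfolding shamir_poly_def by metis
  define XS where "XS = (\<lambda>i. loc_x n k H' y (st_xB (st i)))"
  have lx: "lowdeg ell e A (\<lambda>i. XS i j) (x j)" if j: "j < n" for j
  proof (cases "j < n - k")
    case True
    have L1: "lowdeg ell e A (\<lambda>i. \<Sum>b<k. H' j b * poly (PxB b) (e i)) (\<Sum>b<k. H' j b * x (n - k + b))"
      by (rule lowdeg_sum) (auto intro: lowdeg_cmult px)
    show ?thesis
    proof (rule lowdeg_cong[OF lowdeg_diff[OF lowdeg_const L1]])
      fix i assume "i \<in> A"
      show "y j - (\<Sum>b<k. H' j b * poly (PxB b) (e i)) = XS i j"
        unfolding XS_def loc_x_def using True by (simp add: stxB)
    next
      show "y j - (\<Sum>b<k. H' j b * x (n - k + b)) = x j"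
        using syndrome True by (metis add_diff_cancel_right')
    qed
  next
    case False
    have jk: "j - (n - k) < k" using False j by simp
    show ?thesis
    proof (rule lowdeg_cong[OF px[OF jk]])
      fix i assume "i \<in> A"
      show "poly (PxB (j - (n - k))) (e i) = XS i j"
        unfolding XS_def loc_x_def using False jk by (simp add: stxB)
    next
      show "x (n - k + (j - (n - k))) = x j" using False by simp
    qed
  qed
  have lxp: "lowdeg ell e A (\<lambda>i. XS i j ^ (q ^ s)) (x j ^ (q ^ s))" if "j < n" for j s
    by (rule lowdeg_pow[OF fr qs ef lx[OF that]])
  define om where "om t = (\<Sum>j<n. \<gamma> j * (x j ^ (q ^ t) - x j))" for t
  have lom: "lowdeg ell e A (\<lambda>i. loc_omega q n \<gamma> (XS i) t) (om t)" for t
    unfolding loc_omega_def om_def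
    by (rule lowdeg_sum) (auto intro!: lowdeg_cmult lowdeg_diff lxp lx)
  define z where "z = - (\<Sum>j<n. \<gamma> j * (x j ^ (q ^ r) - x j))"
  have lz: "lowdeg ell e A (\<lambda>i. loc_z q r n \<gamma> (XS i)) z"
    unfolding loc_z_def z_def
    by (rule lowdeg_uminus, rule lowdeg_sum) (auto intro!: lowdeg_cmult lowdeg_diff lxp lx)
  define al where "al t = \<epsilon> * om t + a t" for t
  have pa_nth: "party_alpha q r n k H' y \<gamma> \<epsilon> (st i) ! (t - 1) = \<epsilon> * loc_omega q n \<gamma> (XS i) t + st_a (st i) t"
    if "t \<in> {1..<r}" for i t
    using that by (auto simp: party_alpha_def XS_def)
  have lal: "lowdeg ell e A (\<lambda>i. party_alpha q r n k H' y \<gamma> \<epsilon> (st i) ! (t - 1)) (al t)"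
    if t: "t \<in> {1..<r}" for t
  proof (rule lowdeg_cong[OF lowdeg_add[OF lowdeg_cmult[OF lom] pa[OF t]]])
    fix i
    show "\<epsilon> * loc_omega q n \<gamma> (XS i) t + poly (Pa t) (e i) = party_alpha q r n k H' y \<gamma> \<epsilon> (st i) ! (t - 1)"
      unfolding pa_nth[OF t] sta[OF t] ..
  next
    show "\<epsilon> * om t + a t = al t" by (simp add: al_def)
  qed
  have PA_eq: "PA t = al t" if "t \<in> {1..<r}" for t
    unfolding PA_def prover_alpha_def using lowdeg_lagrange(1)[OF lal[OF that] SA finS cardS inj] .
  define V where "V i = party_v q r n k H' y \<gamma> \<epsilon> PA (st i)" for i
  have root: "(x j ^ (q ^ r) - x j) + (\<Sum>t\<in>{1..<r}. \<beta> t * (x j ^ (q ^ t) - x j)) = 0" if "j < n" for j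
  proof -
    have xU: "x j \<in> U" using U(5) that by blast
    have "poly (\<Prod>u\<in>U. [:- u, 1:]) (x j) = 0"
      unfolding poly_prod using xU by (intro iffD2[OF prod_zero_iff]) auto
    then show ?thesis using beta unfolding subspace_poly_coeffs_def
      by (simp add: poly_sum poly_monom)
  qed
  have sw: "(\<Sum>t\<in>{1..<r}. om t * \<beta> t) = (\<Sum>j<n. \<gamma> j * (\<Sum>t\<in>{1..<r}. \<beta> t * (x j ^ (q ^ t) - x j)))"
    unfolding om_def by (simp add: sum_distrib_left sum_distrib_right mult_ac) (rule sum.swap)
  have zsum: "z - (\<Sum>t\<in>{1..<r}. om t * \<beta> t) = - (\<Sum>j<n. \<gamma> j * ((x j ^ (q ^ r) - x j) + (\<Sum>t\<in>{1..<r}. \<beta> t * (x j ^ (q ^ t) - x j))))"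
    unfolding z_def sw by (simp add: distrib_left sum.distrib)
  have z0: "z - (\<Sum>t\<in>{1..<r}. om t * \<beta> t) = 0"
    unfolding zsum using root by simp
  have alsum: "(\<Sum>t\<in>{1..<r}. al t * \<beta> t) = \<epsilon> * (\<Sum>t\<in>{1..<r}. om t * \<beta> t) + (\<Sum>t\<in>{1..<r}. \<beta> t * a t)"
    unfolding al_def by (simp add: algebra_simps sum.distrib sum_distrib_left)
  have key: "\<epsilon> * z - (\<Sum>t\<in>{1..<r}. al t * \<beta> t) - c = 0"
  proof -
    have "\<epsilon> * z - (\<Sum>t\<in>{1..<r}. al t * \<beta> t) - c = \<epsilon> * (z - (\<Sum>t\<in>{1..<r}. om t * \<beta> t))"
      unfolding alsum c by (simp add: algebra_simps)
    then show ?thesis using z0 by simp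
  qed
  have lV: "lowdeg ell e A V 0"
  proof -
    have L2: "lowdeg ell e A (\<lambda>i. \<Sum>t\<in>{1..<r}. al t * poly (Pbeta t) (e i)) (\<Sum>t\<in>{1..<r}. al t * \<beta> t)"
      by (rule lowdeg_sum) (simp_all add: lowdeg_cmult pbeta)
    show ?thesis
    proof (rule lowdeg_cong[OF lowdeg_diff[OF lowdeg_diff[OF lowdeg_cmult[OF lz] L2] pc]])
      fix i assume "i \<in> A"
      have "(\<Sum>t\<in>{1..<r}. PA t * st_beta (st i) t) = (\<Sum>t\<in>{1..<r}. al t * poly (Pbeta t) (e i))"
        by (rule sum.cong[OF refl]) (simp add: PA_eq stbeta)
      then show "\<epsilon> * loc_z q r n \<gamma> (XS i) - (\<Sum>t\<in>{1..<r}. al t * poly (Pbeta t) (e i)) - poly Pc (e i) = V i"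
        unfolding V_def party_v_def XS_def by (simp add: stc)
    next
      show "\<epsilon> * z - (\<Sum>t\<in>{1..<r}. al t * \<beta> t) - c = 0" by (rule key)
    qed
  qed
  define PAL where "PAL = (\<lambda>i. party_alpha q r n k H' y \<gamma> \<epsilon> (st i))"
  define ash where "ash = (\<lambda>i. if i = istar then party_alpha q r n k H' y \<gamma> \<epsilon> (st istar) else party_alpha q r n k H' y \<gamma> \<epsilon> (st i))"
  define \<alpha>' where "\<alpha>' = (\<lambda>t. \<Sum>i\<in>T. lagrange e T i 0 * (ash i ! (t - 1)))"
  define vI where "vI = (\<lambda>i. party_v q r n k H' y \<gamma> \<epsilon> \<alpha>' (st i))"
  define vstar where "vstar = - (\<Sum>i\<in>I. lagrange e T i 0 * vI i) / lagrange e T istar 0"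
  define vsh where "vsh = (\<lambda>i. if i = istar then vstar else vI i)"
  define aexp where "aexp = (\<lambda>i. map (\<lambda>t. \<Sum>j\<in>T. lagrange e T j (e i) * (ash j ! (t - 1))) [1..<r])"
  define vexp where "vexp = (\<lambda>i. \<Sum>j\<in>T. lagrange e T j (e i) * vsh j)"
  have ash_eq: "ash = PAL" unfolding ash_def PAL_def by auto
  have \<alpha>'_eq: "\<alpha>' t = al t" if "t \<in> {1..<r}" for t
    unfolding \<alpha>'_def ash_eq PAL_def using lowdeg_lagrange(1)[OF lal[OF that] TA finT cardT inj] .
  have vI_eq: "vI i = V i" for i
  proof -
    have "(\<Sum>t\<in>{1..<r}. \<alpha>' t * st_beta (st i) t) = (\<Sum>t\<in>{1..<r}. PA t * st_beta (st i) t)"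
      by (rule sum.cong[OF refl]) (simp add: PA_eq \<alpha>'_eq)
    then show ?thesis unfolding vI_def V_def party_v_def by simp
  qed
  have Lag0: "(\<Sum>j\<in>T. lagrange e T j 0 * V j) = 0"
    using lowdeg_lagrange(1)[OF lV TA finT cardT inj] .
  have Lstar: "lagrange e T istar 0 \<noteq> 0"
    unfolding lagrange_def
  proof
    assume "(\<Prod>t\<in>T - {istar}. (0 - e t) / (e istar - e t)) = 0"
    then obtain t where t: "t \<in> T - {istar}" "(0 - e t) / (e istar - e t) = 0"
      using finT by (auto simp: prod_zero_iff)
    have tA: "t \<in> A" and sA: "istar \<in> A" using t TA unfolding T_def by auto
    have "e t \<noteq> 0" using points(2) tA unfolding A_def by blast
    moreover have "e istar \<noteq> e t" using inj_on_eq_iff[OF inj sA tA] t(1) by blast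
    ultimately show False using t(2) by simp
  qed
  have vstar_eq: "vstar = V istar"
  proof -
    have "lagrange e T istar 0 * V istar + (\<Sum>j\<in>I. lagrange e T j 0 * V j) = 0"
      using Lag0 finI istarI(1) unfolding T_def by simp
    then have "(\<Sum>j\<in>I. lagrange e T j 0 * V j) = - (lagrange e T istar 0 * V istar)"
      by (simp add: eq_neg_iff_add_eq_0 add.commute)
    then show ?thesis unfolding vstar_def vI_eq using Lstar by simp
  qed
  have vsh_eq: "vsh j = V j" for j unfolding vsh_def vstar_eq vI_eq by simp
  have vexp_eq: "vexp i = V i" if "i \<in> A" for i
    unfolding vexp_def vsh_eq using lowdeg_lagrange(2)[OF lV TA finT cardT inj that] .
  have aexp_eq: "aexp i = PAL i" if i: "i \<in> A" for i
  proof -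
    have "aexp i = map (\<lambda>t. PAL i ! (t - 1)) [1..<r]"
      unfolding aexp_def ash_eq
    proof (rule map_cong[OF refl])
      fix t assume "t \<in> set [1..<r]"
      then have t: "t \<in> {1..<r}" by simp
      show "(\<Sum>j\<in>T. lagrange e T j (e i) * (PAL j ! (t - 1))) = PAL i ! (t - 1)"
        unfolding PAL_def using lowdeg_lagrange(2)[OF lal[OF t] TA finT cardT inj i] .
    qed
    also have "\<dots> = PAL i"
      unfolding PAL_def party_alpha_def by (rule map_cong[OF refl]) auto
    finally show ?thesis .
  qed
  have hashf: "Hash (map (\<lambda>i. (aexp i, vexp i)) (sorted_list_of_set S)) = prover_h1 q r n k H' y e S Hash \<gamma> \<epsilon> st"
  proof -
    have "prover_h1 q r n k H' y e S Hash \<gamma> \<epsilon> st = Hash (map (\<lambda>i. (PAL i, V i)) (sorted_list_of_set S))"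
      unfolding prover_h1_def PAL_def V_def PA_def ..
    moreover have "map (\<lambda>i. (aexp i, vexp i)) (sorted_list_of_set S) = map (\<lambda>i. (PAL i, V i)) (sorted_list_of_set S)"
    proof (rule map_cong[OF refl])
      fix i assume "i \<in> set (sorted_list_of_set S)"
      then have "i \<in> A" using finS SA by auto
      then show "(aexp i, vexp i) = (PAL i, V i)" using aexp_eq vexp_eq by simp
    qed
    ultimately show ?thesis by metis
  qed
  have merk: "\<forall>i\<in>I. mrec MH (Com (st i) (\<rho> i)) (i - 1) 0 (prover_path MH Com pad d N st \<rho> i) = prover_h0 MH Com pad d N st \<rho>"
  proof
    fix i assume "i \<in> I"
    then have i: "1 \<le> i" "i \<le> N" using I(1) by auto
    have lf: "cmt_leaves N Com pad st \<rho> (i - 1) = Com (st i) (\<rho> i)"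
    proof -
      have "i - 1 < N" "Suc (i - 1) = i" using i by auto
      then show ?thesis unfolding cmt_leaves_def by simp
    qed
    have "mrec MH (cmt_leaves N Com pad st \<rho> (i - 1)) (i - 1) 0 (mpath MH (cmt_leaves N Com pad st \<rho>) d 0 (i - 1))
        = mroot MH (cmt_leaves N Com pad st \<rho>) d 0"
      by (rule merkle_ok[of 0 0 d]) (use i merkle in auto)
    then show "mrec MH (Com (st i) (\<rho> i)) (i - 1) 0 (prover_path MH Com pad d N st \<rho> i) = prover_h0 MH Com pad d N st \<rho>"
      unfolding lf prover_path_def prover_h0_def .
  qed
  have main: "verifier_accepts q r n k H' y e S MH Com Hash
           (prover_h0 MH Com pad d N st \<rho>)
           (prover_h1 q r n k H' y e S Hash \<gamma> \<epsilon> st)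
           \<gamma> \<epsilon> I istar st \<rho>
           (prover_path MH Com pad d N st \<rho>)
           (party_alpha q r n k H' y \<gamma> \<epsilon> (st istar))"
    unfolding verifier_accepts_def Let_def
    using merk hashf
    unfolding aexp_def vexp_def vsh_def vstar_def vI_def \<alpha>'_def ash_def T_def
    by (intro conjI)
  show ?thesis using main unfolding st_def Let_def .

qed

end
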